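(* Let $r\ge2$, let $\sigma_1,\dots,\sigma_r\in S_\infty$ be cycles with pairwise disjoint supports and let $(\rho_n)$ be a sequence of probability measures on $\mathbb{Y}_n$ such that $\lim_n n^{|\sigma_i|/2}M_{\rho_n}(\sigma_i)$ exists for each $i$. The following are equivalent: (1) for every $r'\ge1$ and every $\{\tau_1,\dots,\tau_{r'}\}\subseteq\{\sigma_1,\dots,\sigma_r\}$, $\lim_n n^{\sum_i|\tau_i|/2}\big(M_{\rho_n}(\prod_i\tau_i)-\prod_iM_{\rho_n}(\tau_i)\big)=0$; (2) for every $r'\ge2$ and every $\{\tau_1,\dots,\tau_{r'}\}\subseteq\{\sigma_1,\dots,\sigma_r\}$, $\lim_n n^{\sum_i|\tau_i|/2}\kappa_{\rho_n,r'}(\tau_1,\dots,\tau_{r'})=0$.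
   Context: $M_\rho(\sigma)=\sum_{\lambda\in\mathbb{Y}_n}\rho(\lambda)\chi_\lambda(\tau)/\dim\lambda$ if $\sigma\in S_\infty$ is conjugate to some $\tau\in S_n$, else $0$. $|\sigma|$ is the minimal number of transpositions with product $\sigma$. Permutation-cumulant: $\kappa_{\rho,r}(\tau_1,\dots,\tau_r)=\sum_{\pi}(-1)^{|\pi|-1}(|\pi|-1)!\prod_{B\in\pi}M_\rho(\prod_{j\in B}\tau_j)$ over set partitions $\pi$ of $\{1,\dots,r\}$. *)

theory Defs
  imports "HOL-Analysis.Analysis" "HOL-Combinatorics.Combinatorics"
begin

text \<open>S_infinity: finitary permutations of nat (0-based labels), i.e. the type nat perm.
  S_n is the subgroup of permutations moving only points in {..<n}.\<close>

definition in_Sn :: "nat \<Rightarrow> nat perm \<Rightarrow> bool" where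
  "in_Sn n \<tau> \<longleftrightarrow> affected \<tau> \<subseteq> {..<n}"

definition conj_perm :: "nat perm \<Rightarrow> nat perm \<Rightarrow> bool" where
  "conj_perm \<sigma> \<tau> \<longleftrightarrow> (\<exists>g. \<sigma> = g * \<tau> * inverse g)"

definition is_cycle :: "nat perm \<Rightarrow> bool" where
  "is_cycle \<sigma> \<longleftrightarrow> affected \<sigma> \<noteq> {} \<and> (\<forall>a\<in>affected \<sigma>. Perm.orbit \<sigma> a = affected \<sigma>)"

definition tlen :: "nat perm \<Rightarrow> nat" where
  "tlen \<sigma> = (LEAST k. \<exists>ts. length ts = k \<and> (\<forall>(a,b)\<in>set ts. a \<noteq> b) \<and>
                 \<sigma> = prod_list (map (\<lambda>(a,b). Perm.swap a b) ts))"

definition Young :: "nat \<Rightarrow> nat list set" where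
  "Young n = {la. sorted_wrt (\<ge>) la \<and> 0 \<notin> set la \<and> sum_list la = n}"

definition part :: "nat list \<Rightarrow> nat \<Rightarrow> nat" where
  "part la i = (if i < length la then la ! i else 0)"

text \<open>Irreducible character chi_lambda(tau) of S_n, tau in S_n, via the Frobenius formula
  chi_lambda(mu) = [x^(lambda+delta)] a_delta p_mu in n variables, delta_i = n-1-i,
  a_delta = sum_w sgn(w) prod_i x_i^(delta_(w i)), p_mu = prod over the cycles c of tau
  (on {..<n}, fixed points included) of p_(card c).\<close>
definition cycles_on :: "nat \<Rightarrow> nat perm \<Rightarrow> nat set set" where
  "cycles_on n \<tau> = (\<lambda>x. Perm.orbit \<tau> x) ` {..<n}"

definition chi :: "nat \<Rightarrow> nat list \<Rightarrow> nat perm \<Rightarrow> int" where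
  "chi n la \<tau> = (\<Sum>w\<in>{w. w permutes {..<n}}. sign w *
      int (card {f \<in> cycles_on n \<tau> \<rightarrow>\<^sub>E {..<n}.
         \<forall>i<n. part la i + (n - 1 - i) = (n - 1 - w i) + (\<Sum>c\<in>{c\<in>cycles_on n \<tau>. f c = i}. card c)}))"

definition dimY :: "nat \<Rightarrow> nat list \<Rightarrow> int" where
  "dimY n la = chi n la 1"

definition prob_on_Young :: "nat \<Rightarrow> (nat list \<Rightarrow> real) \<Rightarrow> bool" where
  "prob_on_Young n \<rho> \<longleftrightarrow> (\<forall>la\<in>Young n. \<rho> la \<ge> 0) \<and> (\<Sum>la\<in>Young n. \<rho> la) = 1"

definition Mrho :: "(nat list \<Rightarrow> real) \<Rightarrow> nat \<Rightarrow> nat perm \<Rightarrow> real" where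
  "Mrho \<rho> n \<sigma> = (if \<exists>\<tau>. in_Sn n \<tau> \<and> conj_perm \<sigma> \<tau> then
      (let \<tau> = (SOME \<tau>. in_Sn n \<tau> \<and> conj_perm \<sigma> \<tau>) in
        \<Sum>la\<in>Young n. \<rho> la * of_int (chi n la \<tau>) / of_int (dimY n la))
     else 0)"

definition kappa :: "(nat perm \<Rightarrow> real) \<Rightarrow> nat \<Rightarrow> (nat \<Rightarrow> nat perm) \<Rightarrow> real" where
  "kappa M r \<tau> = (\<Sum>\<pi>\<in>{\<pi>. partition_on {1..r} \<pi>}.
      (-1) ^ (card \<pi> - 1) * fact (card \<pi> - 1) *
      (\<Prod>B\<in>\<pi>. M (prod_list (map \<tau> (sorted_list_of_set B)))))"

end

theory Submission
  imports Defs
begin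



definition Fins :: "'a \<Rightarrow> 'a set set \<Rightarrow> 'a set option \<Rightarrow> 'a set set" where
  "Fins a P c = (case c of None \<Rightarrow> insert {a} P | Some B \<Rightarrow> insert (insert a B) (P - {B}))"

lemma Fins_recover:
  assumes "partition_on A P" "a \<notin> A" "c \<in> insert None (Some ` P)"
  shows "(\<lambda>B. B - {a}) ` Fins a P c - {{}} = P"
proof -
  have nA: "\<And>B. B \<in> P \<Longrightarrow> a \<notin> B" using assms(1,2) partition_onD1 by fastforce
  have ne: "{} \<notin> P" using assms(1) partition_onD3 by blast
  show ?thesis
  proof (cases c)
    case None
    then show ?thesis using nA ne unfolding Fins_def by (auto simp: image_iff)
  next
    case (Some B)
    then have B: "B \<in> P" using assms(3) by auto
    have "(\<lambda>B. B - {a}) ` Fins a P c = insert B ((\<lambda>B. B - {a}) ` (P - {B}))"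
      using Some nA B unfolding Fins_def by auto
    also have "(\<lambda>B. B - {a}) ` (P - {B}) = P - {B}" using nA by (force simp: image_iff)
    finally show ?thesis using B ne by auto
  qed
qed

lemma Fins_inj:
  assumes "partition_on A P" "a \<notin> A"
  shows "inj_on (Fins a P) (insert None (Some ` P))"
proof (rule inj_onI)
  have nA: "\<And>B. B \<in> P \<Longrightarrow> a \<notin> B" using assms(1,2) partition_onD1 by fastforce
  have ne: "{} \<notin> P" using assms(1) partition_onD3 by blast
  fix c d assume c: "c \<in> insert None (Some ` P)" and d: "d \<in> insert None (Some ` P)"
    and eq: "Fins a P c = Fins a P d"
  have key: "{a} \<in> Fins a P (Some B) \<longleftrightarrow> False" if "B \<in> P" for B
    using that nA ne unfolding Fins_def by (auto simp: subset_singleton_iff)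
  have key2: "insert a B' \<in> Fins a P (Some B) \<longleftrightarrow> B' = B" if "B \<in> P" "B' \<in> P" for B B'
    using that nA ne unfolding Fins_def by auto (metis insert_ident nA)+
  show "c = d"
  proof (cases c)
    case None
    have "{a} \<in> Fins a P c" using None by (simp add: Fins_def)
    then show ?thesis using None d eq key by (cases d) auto
  next
    case (Some B)
    have B: "B \<in> P" using Some c by auto
    have inB: "insert a B \<in> Fins a P c" using Some by (simp add: Fins_def)
    show ?thesis
    proof (cases d)
      case None
      have "{a} \<in> Fins a P d" using None by (simp add: Fins_def)
      then show ?thesis using key[OF B] eq Some by simp
    next
      case (Some B')
      then have B': "B' \<in> P" using d by auto
      from inB eq Some have "insert a B \<in> Fins a P (Some B')" by simp
      then show ?thesis using key2[OF B' B] Some \<open>c = Some B\<close> by simp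
    qed
  qed
qed

lemma part_disj: "partition_on A P \<Longrightarrow> X \<in> P \<Longrightarrow> disjnt X (\<Union>(P - {X}))"
  unfolding partition_on_def disjnt_def pairwise_def by auto

lemma Fins_part:
  assumes "partition_on A P" "a \<notin> A" "c \<in> insert None (Some ` P)"
  shows "partition_on (insert a A) (Fins a P c)"
proof -
  have nA: "\<And>B. B \<in> P \<Longrightarrow> a \<notin> B" using assms(1,2) partition_onD1 by fastforce
  show ?thesis
  proof (cases c)
    case None
    have "partition_on (insert a A) (insert {a} P) \<longleftrightarrow> partition_on (insert a A - {a}) P \<and> {a} \<subseteq> insert a A \<and> {a} \<noteq> {}"
      by (rule partition_on_insert) (use nA in \<open>auto simp: disjnt_def\<close>)
    then show ?thesis using None assms by (simp add: Fins_def)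
  next
    case (Some B)
    have B: "B \<in> P" using Some assms(3) by auto
    have d: "disjnt (insert a B) (\<Union>(P - {B}))" using part_disj[OF assms(1) B] nA
      unfolding disjnt_def by blast
    have "partition_on (insert a A - insert a B) (P - {B})"
    proof -
      have "partition_on A (insert B (P - {B}))" using B assms(1) by (simp add: insert_absorb)
      moreover have "disjnt B (\<Union>(P - {B}))" using d by (simp add: disjnt_def)
      ultimately have "partition_on (A - B) (P - {B})" using partition_on_insert by blast
      moreover have "insert a A - insert a B = A - B" using assms(2) by auto
      ultimately show ?thesis by simp
    qed
    moreover have "insert a B \<subseteq> insert a A" using B assms(1) partition_onD1 by fastforce
    ultimately have "partition_on (insert a A) (insert (insert a B) (P - {B}))"
      using partition_on_insert[OF d] by blast
    then show ?thesis using Some by (simp add: Fins_def)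
  qed
qed

lemma Fins_surj:
  assumes "partition_on (insert a A) Q" "a \<notin> A"
  shows "\<exists>P c. partition_on A P \<and> c \<in> insert None (Some ` P) \<and> Q = Fins a P c"
proof -
  obtain X where X: "X \<in> Q" "a \<in> X" using assms(1) partition_onD1 by fastforce
  have QX: "Q = insert X (Q - {X})" using X by auto
  have d: "disjnt X (\<Union>(Q - {X}))" using part_disj[OF assms(1) X(1)] .
  have P0: "partition_on (insert a A - X) (Q - {X})" "X \<subseteq> insert a A" "X \<noteq> {}"
    using partition_on_insert[OF d, of "insert a A"] assms(1) QX by auto
  show ?thesis
  proof (cases "X = {a}")
    case True
    have "insert a A - X = A" using True assms(2) by auto
    then have "partition_on A (Q - {X})" using P0 by simp
    moreover have "Q = Fins a (Q - {X}) None" using QX True by (simp add: Fins_def)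
    ultimately show ?thesis by blast
  next
    case False
    define B where "B = X - {a}"
    have Bne: "B \<noteq> {}" using False X B_def by auto
    have dB: "disjnt B (\<Union>(Q - {X}))" using d B_def by (auto simp: disjnt_def)
    have BQ: "B \<notin> Q - {X}" using dB Bne by (auto simp: disjnt_def)
    have "insert a A - X = A - B" using B_def X assms(2) by auto
    moreover have "B \<subseteq> A" using P0(2) B_def by auto
    ultimately have "partition_on A (insert B (Q - {X}))"
      using partition_on_insert[OF dB, of A] P0 Bne by simp
    moreover have "insert B (Q - {X}) - {B} = Q - {X}" using BQ by auto
    moreover have "insert a B = X" using B_def X by auto
    ultimately have "partition_on A (insert B (Q - {X})) \<and> Some B \<in> insert None (Some ` (insert B (Q - {X})))
       \<and> Q = Fins a (insert B (Q - {X})) (Some B)"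
      using QX by (simp add: Fins_def)
    then show ?thesis by blast
  qed
qed

lemma card_Fins:
  assumes "partition_on A P" "a \<notin> A" "finite A"
  shows "card (Fins a P None) = card P + 1"
    "B \<in> P \<Longrightarrow> card (Fins a P (Some B)) = card P"
proof -
  have nA: "\<And>B. B \<in> P \<Longrightarrow> a \<notin> B" using assms(1,2) partition_onD1 by fastforce
  have fP: "finite P" using finite_elements assms by blast
  have "{a} \<notin> P" using nA by blast
  then show "card (Fins a P None) = card P + 1" using fP by (simp add: Fins_def)
  assume B: "B \<in> P"
  have "insert a B \<notin> P - {B}" using nA by auto
  then show "card (Fins a P (Some B)) = card P"
  proof -
    have "card P > 0" using fP B card_gt_0_iff by blast
    then show ?thesis using \<open>insert a B \<notin> P - {B}\<close> fP B by (simp add: Fins_def card_Diff_singleton)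
  qed
qed



lemma sum_parts_insert:
  fixes h :: "nat \<Rightarrow> real"
  assumes "finite A" "a \<notin> A"
  shows "(\<Sum>Q\<in>{Q. partition_on (insert a A) Q}. h (card Q))
       = (\<Sum>P\<in>{P. partition_on A P}. h (card P + 1) + of_nat (card P) * h (card P))"
proof -
  define D where "D = (SIGMA P:{P. partition_on A P}. insert None (Some ` P))"
  define F where "F = (\<lambda>(P, c). Fins a P c)"
  have inj: "inj_on F D"
  proof (rule inj_onI)
    fix x y assume x: "x \<in> D" and y: "y \<in> D" and e: "F x = F y"
    obtain P c where xx: "x = (P, c)" by fastforce
    obtain P' c' where yy: "y = (P', c')" by fastforce
    have x1: "partition_on A P" "c \<in> insert None (Some ` P)" using x unfolding xx D_def by auto
    have y1: "partition_on A P'" "c' \<in> insert None (Some ` P')" using y unfolding yy D_def by auto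
    have e1: "Fins a P c = Fins a P' c'" using e unfolding xx yy F_def by simp
    have "P = P'" using Fins_recover[OF x1(1) assms(2) x1(2)] Fins_recover[OF y1(1) assms(2) y1(2)] e1 by simp
    then have "c = c'" using inj_onD[OF Fins_inj[OF x1(1) assms(2)] _ x1(2)] y1(2) e1 by simp
    then show "x = y" using \<open>P = P'\<close> xx yy by simp
  qed
  have img: "F ` D = {Q. partition_on (insert a A) Q}"
  proof
    show "F ` D \<subseteq> {Q. partition_on (insert a A) Q}"
    proof
      fix Q assume "Q \<in> F ` D"
      then obtain x where x: "x \<in> D" "Q = F x" by (rule imageE)
      obtain P c where xx: "x = (P, c)" by fastforce
      have "partition_on A P" "c \<in> insert None (Some ` P)" using x(1) unfolding xx D_def by auto
      moreover have "Q = Fins a P c" using x(2) unfolding xx F_def by simp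
      ultimately show "Q \<in> {Q. partition_on (insert a A) Q}" using Fins_part[of A P a c] assms(2) by simp
    qed
    show "{Q. partition_on (insert a A) Q} \<subseteq> F ` D"
    proof
      fix Q assume "Q \<in> {Q. partition_on (insert a A) Q}"
      then have Qp: "partition_on (insert a A) Q" by simp
      obtain P c where Pc: "partition_on A P" "c \<in> insert None (Some ` P)" "Q = Fins a P c"
        using Fins_surj[OF Qp assms(2)] by blast
      have "(P, c) \<in> D" using Pc(1,2) unfolding D_def by simp
      moreover have "Q = F (P, c)" using Pc(3) unfolding F_def by simp
      ultimately show "Q \<in> F ` D" by (rule rev_image_eqI)
    qed
  qed
  have fin: "finite {P. partition_on A P}" using finitely_many_partition_on assms(1) by blast
  have "(\<Sum>Q\<in>{Q. partition_on (insert a A) Q}. h (card Q)) = (\<Sum>x\<in>D. h (card (F x)))"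
    using sum.reindex[OF inj, of "\<lambda>Q. h (card Q)"] img by (simp add: o_def)
  also have "\<dots> = (\<Sum>(P,c)\<in>D. h (card (Fins a P c)))"
    by (rule sum.cong) (auto simp: F_def)
  also have "\<dots> = (\<Sum>P\<in>{P. partition_on A P}. \<Sum>c\<in>insert None (Some ` P). h (card (Fins a P c)))"
    unfolding D_def
    by (rule sum.Sigma[symmetric, where g="\<lambda>P c. h (card (Fins a P c))"]) (use fin finite_elements[OF assms(1)] in auto)
  also have "\<dots> = (\<Sum>P\<in>{P. partition_on A P}. h (card P + 1) + of_nat (card P) * h (card P))"
  proof (rule sum.cong[OF refl])
    fix P assume P: "P \<in> {P. partition_on A P}"
    have fP: "finite P" using finite_elements assms(1) P by blast
    have "(\<Sum>c\<in>insert None (Some ` P). h (card (Fins a P c)))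
        = h (card (Fins a P None)) + (\<Sum>B\<in>P. h (card (Fins a P (Some B))))"
      using fP by (subst sum.insert) (auto simp: sum.reindex)
    also have "\<dots> = h (card P + 1) + (\<Sum>B\<in>P. h (card P))"
      using card_Fins[of A P a] P assms by simp
    finally show "(\<Sum>c\<in>insert None (Some ` P). h (card (Fins a P c))) = h (card P + 1) + of_nat (card P) * h (card P)"
      by simp
  qed
  finally show ?thesis .
qed


lemma sum_mu_zero:
  assumes "finite A" "card A \<ge> 2"
  shows "(\<Sum>P\<in>{P. partition_on A P}. (-1::real) ^ (card P - 1) * fact (card P - 1)) = 0"
proof -
  have "A \<noteq> {}" using assms by auto
  then obtain a where "a \<in> A" by blast
  define A' where "A' = A - {a}"
  have A: "A = insert a A'" "a \<notin> A'" using \<open>a \<in> A\<close> A'_def by auto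
  have fA': "finite A'" using A assms by auto
  have "A' \<noteq> {}" using A assms by auto
  have "(\<Sum>P\<in>{P. partition_on A P}. (-1::real) ^ (card P - 1) * fact (card P - 1))
     = (\<Sum>P\<in>{P. partition_on A' P}. (-1) ^ (card P + 1 - 1) * fact (card P + 1 - 1) + of_nat (card P) * ((-1) ^ (card P - 1) * fact (card P - 1)))"
    unfolding A(1) by (rule sum_parts_insert[OF fA' A(2)])
  also have "\<dots> = 0"
  proof (rule sum.neutral, rule ballI)
    fix P assume P: "P \<in> {P. partition_on A' P}"
    have "P \<noteq> {}" using P \<open>A' \<noteq> {}\<close> partition_onD1 by fastforce
    moreover have "finite P" using P fA' finite_elements by blast
    ultimately obtain k where k: "card P = Suc k" by (metis card_0_eq not0_implies_Suc)
    show "(-1::real) ^ (card P + 1 - 1) * fact (card P + 1 - 1) + of_nat (card P) * ((-1) ^ (card P - 1) * fact (card P - 1)) = 0"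
      unfolding k by (simp add: fact_Suc algebra_simps)
  qed
  finally show ?thesis .
qed




definition Pm :: "(nat \<Rightarrow> nat perm \<Rightarrow> real) \<Rightarrow> (nat \<Rightarrow> nat perm) \<Rightarrow> nat \<Rightarrow> nat list \<Rightarrow> real" where
  "Pm M s n xs = real n powr (real (sum_list (map (\<lambda>j. tlen (s j)) xs)) / 2) * M n (prod_list (map s xs))"

lemma part_blocks:
  assumes "partition_on A P" "B \<in> P" "finite A"
  shows "finite B" "B \<noteq> {}" "B \<subseteq> A"
proof -
  show "B \<subseteq> A" using assms(1,2) partition_onD1 by blast
  then show "finite B" using assms(3) finite_subset by blast
  show "B \<noteq> {}" using assms(1,2) partition_onD3 by blast
qed

lemma part_proper:
  assumes "partition_on A P" "P \<noteq> {A}" "B \<in> P"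
  shows "B \<noteq> A"
proof
  assume BA: "B = A"
  have "P \<subseteq> {A}"
  proof
    fix C assume C: "C \<in> P"
    show "C \<in> {A}"
    proof (rule ccontr)
      assume "C \<notin> {A}"
      then have "C \<noteq> B" using BA by simp
      then have "disjnt C B" using partition_onD2[OF assms(1)] C assms(3) unfolding pairwise_def by blast
      then have "C \<inter> B = {}" by (simp add: disjnt_def)
      moreover have "C \<subseteq> A" using assms(1) C partition_onD1 by blast
      ultimately have "C = {}" using BA by blast
      then show False using assms(1) C partition_onD3 by blast
    qed
  qed
  then show False using assms BA by blast
qed

lemma prod_part:
  assumes "partition_on A P" "finite A"
  shows "(\<Prod>B\<in>P. \<Prod>j\<in>B. h j) = (\<Prod>j\<in>A. (h j :: real))"
proof -
  have "(\<Prod>j\<in>A. h j) = (\<Prod>j\<in>\<Union>P. h j)" using partition_onD1[OF assms(1)] by simp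
  also have "\<dots> = (\<Prod>B\<in>P. \<Prod>j\<in>B. h j)"
    by (rule prod.Union_disjoint_sets[simplified o_def])
      (use part_blocks[OF assms(1) _ assms(2)] partition_onD2[OF assms(1)] in auto)
  finally show ?thesis by simp
qed

lemma sum_part:
  assumes "partition_on A P" "finite A"
  shows "(\<Sum>j\<in>A. (h j :: nat)) = (\<Sum>B\<in>P. \<Sum>j\<in>B. h j)"
proof -
  have "(\<Sum>j\<in>A. h j) = (\<Sum>j\<in>\<Union>P. h j)" using partition_onD1[OF assms(1)] by simp
  also have "\<dots> = (\<Sum>B\<in>P. \<Sum>j\<in>B. h j)"
    by (rule sum.Union_disjoint_sets[simplified o_def])
      (use part_blocks[OF assms(1) _ assms(2)] partition_onD2[OF assms(1)] in auto)
  finally show ?thesis .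
qed

lemma Pm_sorted:
  assumes "finite B"
  shows "Pm M s n (map g (sorted_list_of_set B)) =
    real n powr (real (\<Sum>j\<in>B. tlen (s (g j))) / 2) * M n (prod_list (map (s \<circ> g) (sorted_list_of_set B)))"
proof -
  have "sum_list (map (\<lambda>j. tlen (s j)) (map g (sorted_list_of_set B))) = (\<Sum>j\<in>B. tlen (s (g j)))"
    using sum.distinct_set_conv_list[of "sorted_list_of_set B" "\<lambda>j. tlen (s (g j))"] assms
    by (simp add: o_def)
  then show ?thesis unfolding Pm_def by (simp add: o_def)
qed

lemma kappa_scaled:
  fixes M :: "nat \<Rightarrow> nat perm \<Rightarrow> real"
  assumes "n > 0"
  shows "real n powr (real (\<Sum>j=1..r'. tlen (s (g j))) / 2) * kappa (M n) r' (s \<circ> g)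
    = (\<Sum>P\<in>{P. partition_on {1..r'} P}. (-1) ^ (card P - 1) * fact (card P - 1) *
         (\<Prod>B\<in>P. Pm M s n (map g (sorted_list_of_set B))))"
  unfolding kappa_def sum_distrib_left
proof (rule sum.cong[OF refl])
  fix P assume "P \<in> {P. partition_on {1..r'} P}"
  then have P: "partition_on {1..r'} P" by simp
  have fP: "finite P" using P finite_elements by blast
  have fB: "\<And>B. B \<in> P \<Longrightarrow> finite B" using part_blocks[OF P] by blast
  have "real n powr (real (\<Sum>j=1..r'. tlen (s (g j))) / 2)
      = real n powr (\<Sum>B\<in>P. real (\<Sum>j\<in>B. tlen (s (g j))) / 2)"
    using sum_part[OF P, of "\<lambda>j. tlen (s (g j))"] by (simp add: sum_divide_distrib)
  also have "\<dots> = (\<Prod>B\<in>P. real n powr (real (\<Sum>j\<in>B. tlen (s (g j))) / 2))"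
    using assms by (simp add: powr_sum)
  finally have e: "real n powr (real (\<Sum>j=1..r'. tlen (s (g j))) / 2) = \<dots>" .
  show "real n powr (real (\<Sum>j=1..r'. tlen (s (g j))) / 2) *
         ((- 1) ^ (card P - 1) * fact (card P - 1) * (\<Prod>B\<in>P. M n (prod_list (map (s \<circ> g) (sorted_list_of_set B))))) =
         (- 1) ^ (card P - 1) * fact (card P - 1) * (\<Prod>B\<in>P. Pm M s n (map g (sorted_list_of_set B)))"
    unfolding e using Pm_sorted[OF fB, where M=M and s=s and n=n and g=g] by (simp add: prod.distrib)
qed

lemma nth_map_list:
  assumes "distinct xs"
  shows "inj_on (\<lambda>k. xs ! (k - 1)) {1..length xs}"
    "(\<lambda>k. xs ! (k - 1)) ` {1..length xs} = set xs"
    "map (\<lambda>k. xs ! (k - 1)) [1..<length xs + 1] = xs"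
proof -
  show "inj_on (\<lambda>k. xs ! (k - 1)) {1..length xs}"
  proof (rule inj_onI)
    fix k k' assume k: "k \<in> {1..length xs}" and k': "k' \<in> {1..length xs}" and e: "xs ! (k - 1) = xs ! (k' - 1)"
    then have "k - 1 = k' - 1" using nth_eq_iff_index_eq[OF assms] by auto
    then show "k = k'" using k k' by auto
  qed
  show "(\<lambda>k. xs ! (k - 1)) ` {1..length xs} = set xs"
  proof
    show "(\<lambda>k. xs ! (k - 1)) ` {1..length xs} \<subseteq> set xs" by auto
    show "set xs \<subseteq> (\<lambda>k. xs ! (k - 1)) ` {1..length xs}"
    proof
      fix x assume "x \<in> set xs"
      then obtain i where i: "i < length xs" "x = xs ! i" by (auto simp: in_set_conv_nth)
      then show "x \<in> (\<lambda>k. xs ! (k - 1)) ` {1..length xs}" by (intro image_eqI[of _ _ "i + 1"]) auto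
    qed
  qed
  show "map (\<lambda>k. xs ! (k - 1)) [1..<length xs + 1] = xs"
    by (rule nth_equalityI) (auto simp del: upt_Suc)
qed

lemma sorted_1n: "sorted_list_of_set {1..m} = [1..<m+1]"
proof -
  have "{1..m} = {1..<m+1}" by auto
  then show ?thesis by simp
qed

lemma diff_tendsto_iff:
  fixes a b :: "nat \<Rightarrow> real"
  assumes "b \<longlonglongrightarrow> c"
  shows "((\<lambda>n. a n - b n) \<longlonglongrightarrow> 0) \<longleftrightarrow> (a \<longlonglongrightarrow> c)"
proof
  assume "(\<lambda>n. a n - b n) \<longlonglongrightarrow> 0"
  from tendsto_add[OF this assms] show "a \<longlonglongrightarrow> c" by simp
next
  assume "a \<longlonglongrightarrow> c"
  from tendsto_diff[OF this assms] show "(\<lambda>n. a n - b n) \<longlonglongrightarrow> 0" by simp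
qed

lemma block_list:
  fixes g :: "nat \<Rightarrow> nat" and m r :: nat
  assumes "inj_on g {1..m}" "g ` {1..m} \<subseteq> {1..r}" "partition_on {1..m} P" "B \<in> P"
  shows "map g (sorted_list_of_set B) \<noteq> []" "distinct (map g (sorted_list_of_set B))"
    "set (map g (sorted_list_of_set B)) \<subseteq> {1..r}" "length (map g (sorted_list_of_set B)) = card B"
    "(\<Prod>j\<in>set (map g (sorted_list_of_set B)). (L j :: real)) = (\<Prod>j\<in>B. L (g j))"
proof -
  have fA: "finite {1..m}" by simp
  note bl = part_blocks[OF assms(3,4) fA]
  have fB: "finite B" "B \<noteq> {}" "B \<subseteq> {1..m}" using bl by auto
  have inj: "inj_on g B" using assms(1) fB(3) inj_on_subset by blast
  show "map g (sorted_list_of_set B) \<noteq> []" using fB by simp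
  show "distinct (map g (sorted_list_of_set B))" using fB inj by (simp add: distinct_map)
  show "set (map g (sorted_list_of_set B)) \<subseteq> {1..r}" using fB assms(2) by auto
  show "length (map g (sorted_list_of_set B)) = card B" using fB by simp
  show "(\<Prod>j\<in>set (map g (sorted_list_of_set B)). L j) = (\<Prod>j\<in>B. L (g j))"
    using fB inj by (simp add: prod.reindex)
qed



theorem mainTheorem14:
  fixes r :: nat and \<sigma> :: "nat \<Rightarrow> nat perm" and \<rho> :: "nat \<Rightarrow> nat list \<Rightarrow> real"
  assumes "r \<ge> 2"
    and "\<forall>i\<in>{1..r}. is_cycle (\<sigma> i)"
    and "\<forall>i\<in>{1..r}. \<forall>j\<in>{1..r}. i \<noteq> j \<longrightarrow> affected (\<sigma> i) \<inter> affected (\<sigma> j) = {}"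
    and "\<forall>n. prob_on_Young n (\<rho> n)"
    and "\<forall>i\<in>{1..r}. convergent (\<lambda>n. real n powr (real (tlen (\<sigma> i)) / 2) * Mrho (\<rho> n) n (\<sigma> i))"
  shows "(\<forall>r'\<ge>1. \<forall>g. inj_on g {1..r'} \<and> g ` {1..r'} \<subseteq> {1..r} \<longrightarrow>
            (\<lambda>n. real n powr (real (\<Sum>j=1..r'. tlen (\<sigma> (g j))) / 2) *
               (Mrho (\<rho> n) n (prod_list (map (\<sigma> \<circ> g) [1..<r'+1]))
                - (\<Prod>j=1..r'. Mrho (\<rho> n) n (\<sigma> (g j))))) \<longlonglongrightarrow> 0)
     \<longleftrightarrow>
         (\<forall>r'\<ge>2. \<forall>g. inj_on g {1..r'} \<and> g ` {1..r'} \<subseteq> {1..r} \<longrightarrow>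
            (\<lambda>n. real n powr (real (\<Sum>j=1..r'. tlen (\<sigma> (g j))) / 2) *
               kappa (Mrho (\<rho> n) n) r' (\<sigma> \<circ> g)) \<longlonglongrightarrow> 0)"
proof -
  define M where "M = (\<lambda>n. Mrho (\<rho> n) n)"
  define L where "L j = lim (\<lambda>n. real n powr (real (tlen (\<sigma> j)) / 2) * Mrho (\<rho> n) n (\<sigma> j))" for j
  have single: "(\<lambda>n. Pm M \<sigma> n [j]) \<longlonglongrightarrow> L j" if "j \<in> {1..r}" for j
    using assms(5) that by (simp add: Pm_def M_def L_def convergent_LIMSEQ_iff)
  have link: "((\<lambda>n. real n powr (real (\<Sum>j=1..r'. tlen (\<sigma> (g j))) / 2) *
               (Mrho (\<rho> n) n (prod_list (map (\<sigma> \<circ> g) [1..<r'+1]))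
                - (\<Prod>j=1..r'. Mrho (\<rho> n) n (\<sigma> (g j))))) \<longlonglongrightarrow> 0)
     \<longleftrightarrow> ((\<lambda>n. Pm M \<sigma> n (map g [1..<r'+1])) \<longlonglongrightarrow> (\<Prod>j=1..r'. L (g j)))"
    if g: "inj_on g {1..r'}" "g ` {1..r'} \<subseteq> {1..r}" for r' g
  proof -
    have setu: "set [1..<r'+1] = {1..r'}" by auto
    have e: "\<forall>\<^sub>F n in sequentially.
      real n powr (real (\<Sum>j=1..r'. tlen (\<sigma> (g j))) / 2) *
               (Mrho (\<rho> n) n (prod_list (map (\<sigma> \<circ> g) [1..<r'+1]))
                - (\<Prod>j=1..r'. Mrho (\<rho> n) n (\<sigma> (g j))))
      = Pm M \<sigma> n (map g [1..<r'+1]) - (\<Prod>j=1..r'. Pm M \<sigma> n [g j])"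
      using eventually_gt_at_top[of 0]
    proof eventually_elim
      case (elim n)
      have s1: "sum_list (map (\<lambda>j. tlen (\<sigma> j)) (map g [1..<r'+1])) = (\<Sum>j=1..r'. tlen (\<sigma> (g j)))"
        using sum.distinct_set_conv_list[of "[1..<r'+1]" "\<lambda>j. tlen (\<sigma> (g j))"] setu by (simp add: o_def)
      have p1: "(\<Prod>j=1..r'. Pm M \<sigma> n [g j]) = (\<Prod>j=1..r'. real n powr (real (tlen (\<sigma> (g j))) / 2)) *
          (\<Prod>j=1..r'. Mrho (\<rho> n) n (\<sigma> (g j)))"
        by (simp add: Pm_def M_def prod.distrib)
      have p2: "(\<Prod>j=1..r'. real n powr (real (tlen (\<sigma> (g j))) / 2)) = real n powr (real (\<Sum>j=1..r'. tlen (\<sigma> (g j))) / 2)"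
        using elim by (simp add: powr_sum sum_divide_distrib)
      show ?case unfolding p1 p2 using s1 by (simp add: Pm_def M_def o_def right_diff_distrib)
    qed
    have conv: "(\<lambda>n. \<Prod>j=1..r'. Pm M \<sigma> n [g j]) \<longlonglongrightarrow> (\<Prod>j=1..r'. L (g j))"
    proof (rule tendsto_prod)
      fix j assume "j \<in> {1..r'}"
      then have "g j \<in> {1..r}" using g(2) by blast
      then show "(\<lambda>n. Pm M \<sigma> n [g j]) \<longlonglongrightarrow> L (g j)" by (rule single)
    qed
    show ?thesis
      unfolding tendsto_cong[OF e] by (rule diff_tendsto_iff[OF conv])
  qed
  define ALL1 where "ALL1 \<longleftrightarrow> (\<forall>xs. xs \<noteq> [] \<longrightarrow> distinct xs \<longrightarrow> set xs \<subseteq> {1..r} \<longrightarrow>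
       (\<lambda>n. Pm M \<sigma> n xs) \<longlonglongrightarrow> (\<Prod>j\<in>set xs. L j))"
  have setu: "set [1..<k+1] = {1..k}" for k :: nat by auto
  have eq1: "(\<forall>r'\<ge>1. \<forall>g. inj_on g {1..r'} \<and> g ` {1..r'} \<subseteq> {1..r} \<longrightarrow>
            (\<lambda>n. real n powr (real (\<Sum>j=1..r'. tlen (\<sigma> (g j))) / 2) *
               (Mrho (\<rho> n) n (prod_list (map (\<sigma> \<circ> g) [1..<r'+1]))
                - (\<Prod>j=1..r'. Mrho (\<rho> n) n (\<sigma> (g j))))) \<longlonglongrightarrow> 0) \<longleftrightarrow> ALL1"
  proof
    assume H1: "\<forall>r'\<ge>1. \<forall>g. inj_on g {1..r'} \<and> g ` {1..r'} \<subseteq> {1..r} \<longrightarrow>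
            (\<lambda>n. real n powr (real (\<Sum>j=1..r'. tlen (\<sigma> (g j))) / 2) *
               (Mrho (\<rho> n) n (prod_list (map (\<sigma> \<circ> g) [1..<r'+1]))
                - (\<Prod>j=1..r'. Mrho (\<rho> n) n (\<sigma> (g j))))) \<longlonglongrightarrow> 0"
    show ALL1 unfolding ALL1_def
    proof (intro allI impI)
      fix xs :: "nat list" assume xs: "xs \<noteq> []" "distinct xs" "set xs \<subseteq> {1..r}"
      define g where "g = (\<lambda>k. xs ! (k - 1))"
      note nm = nth_map_list[OF xs(2), folded g_def]
      have r1: "length xs \<ge> 1" using xs(1) by (cases xs) auto
      have "g ` {1..length xs} \<subseteq> {1..r}" using nm(2) xs(3) by simp
      then have "(\<lambda>n. Pm M \<sigma> n (map g [1..<length xs+1])) \<longlonglongrightarrow> (\<Prod>j=1..length xs. L (g j))"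
        using link[OF nm(1)] H1 r1 nm(1) by blast
      moreover have "(\<Prod>j=1..length xs. L (g j)) = (\<Prod>j\<in>set xs. L j)"
        using prod.reindex[OF nm(1), of L] nm(2) by (simp add: o_def)
      ultimately show "(\<lambda>n. Pm M \<sigma> n xs) \<longlonglongrightarrow> (\<Prod>j\<in>set xs. L j)" using nm(3) by simp
    qed
  next
    assume A: ALL1
    show "\<forall>r'\<ge>1. \<forall>g. inj_on g {1..r'} \<and> g ` {1..r'} \<subseteq> {1..r} \<longrightarrow>
            (\<lambda>n. real n powr (real (\<Sum>j=1..r'. tlen (\<sigma> (g j))) / 2) *
               (Mrho (\<rho> n) n (prod_list (map (\<sigma> \<circ> g) [1..<r'+1]))
                - (\<Prod>j=1..r'. Mrho (\<rho> n) n (\<sigma> (g j))))) \<longlonglongrightarrow> 0"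
    proof (intro allI impI)
      fix r' :: nat and g assume r1: "r' \<ge> 1" and g: "inj_on g {1..r'} \<and> g ` {1..r'} \<subseteq> {1..r}"
      define xs where "xs = map g [1..<r'+1]"
      have xs: "xs \<noteq> []" "distinct xs" "set xs = g ` {1..r'}"
        using r1 g setu[of r'] unfolding xs_def by (auto simp: distinct_map simp del: upt_Suc)
      have "set xs \<subseteq> {1..r}" using xs(3) g by simp
      then have "(\<lambda>n. Pm M \<sigma> n xs) \<longlonglongrightarrow> (\<Prod>j\<in>set xs. L j)" using A xs(1,2) unfolding ALL1_def by blast
      moreover have "(\<Prod>j\<in>set xs. L j) = (\<Prod>j=1..r'. L (g j))"
        using prod.reindex[of g "{1..r'}" L] g xs(3) by (simp add: o_def)
      ultimately show "(\<lambda>n. real n powr (real (\<Sum>j=1..r'. tlen (\<sigma> (g j))) / 2) *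
               (Mrho (\<rho> n) n (prod_list (map (\<sigma> \<circ> g) [1..<r'+1]))
                - (\<Prod>j=1..r'. Mrho (\<rho> n) n (\<sigma> (g j))))) \<longlonglongrightarrow> 0"
        using link[of g r'] g unfolding xs_def by simp
    qed
  qed
  have kap: "\<forall>\<^sub>F n in sequentially. real n powr (real (\<Sum>j=1..r'. tlen (\<sigma> (g j))) / 2) *
               kappa (Mrho (\<rho> n) n) r' (\<sigma> \<circ> g)
     = (\<Sum>P\<in>{P. partition_on {1..r'} P}. (-1) ^ (card P - 1) * fact (card P - 1) *
         (\<Prod>B\<in>P. Pm M \<sigma> n (map g (sorted_list_of_set B))))" for r' g
    using eventually_gt_at_top[of 0]
  proof eventually_elim
    case (elim n)
    show ?case using kappa_scaled[OF elim, where M=M and s=\<sigma> and g=g and r'=r'] by (simp add: M_def)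
  qed
  have A2: "(\<forall>r'\<ge>2. \<forall>g. inj_on g {1..r'} \<and> g ` {1..r'} \<subseteq> {1..r} \<longrightarrow>
            (\<lambda>n. real n powr (real (\<Sum>j=1..r'. tlen (\<sigma> (g j))) / 2) *
               kappa (Mrho (\<rho> n) n) r' (\<sigma> \<circ> g)) \<longlonglongrightarrow> 0)" if A: ALL1
  proof (intro allI impI)
    fix r' :: nat and g assume r2: "r' \<ge> 2" and g: "inj_on g {1..r'} \<and> g ` {1..r'} \<subseteq> {1..r}"
    define C where "C = (\<Prod>j\<in>{1..r'}. L (g j))"
    have lim: "(\<lambda>n. \<Sum>P\<in>{P. partition_on {1..r'} P}. (-1) ^ (card P - 1) * fact (card P - 1) *
         (\<Prod>B\<in>P. Pm M \<sigma> n (map g (sorted_list_of_set B))))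
       \<longlonglongrightarrow> (\<Sum>P\<in>{P. partition_on {1..r'} P}. (-1) ^ (card P - 1) * fact (card P - 1) *
         (\<Prod>B\<in>P. \<Prod>j\<in>B. L (g j)))"
    proof (intro tendsto_sum tendsto_mult tendsto_const tendsto_prod)
      fix P B assume P: "P \<in> {P. partition_on {1..r'} P}" and B: "B \<in> P"
      have P': "partition_on {1..r'} P" using P by simp
      note bl = block_list[OF conjunct1[OF g] conjunct2[OF g] P' B] 
      have "(\<lambda>n. Pm M \<sigma> n (map g (sorted_list_of_set B))) \<longlonglongrightarrow> (\<Prod>j\<in>set (map g (sorted_list_of_set B)). L j)"
        using A bl(1,2,3) unfolding ALL1_def by blast
      then show "(\<lambda>n. Pm M \<sigma> n (map g (sorted_list_of_set B))) \<longlonglongrightarrow> (\<Prod>j\<in>B. L (g j))"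
        using bl(5) by simp
    qed
    have "(\<Sum>P\<in>{P. partition_on {1..r'} P}. (-1) ^ (card P - 1) * fact (card P - 1) *
         (\<Prod>B\<in>P. \<Prod>j\<in>B. L (g j)))
       = (\<Sum>P\<in>{P. partition_on {1..r'} P}. (-1) ^ (card P - 1) * fact (card P - 1) * C)"
      by (rule sum.cong[OF refl]) (simp add: prod_part C_def)
    also have "\<dots> = (\<Sum>P\<in>{P. partition_on {1..r'} P}. (-1::real) ^ (card P - 1) * fact (card P - 1)) * C"
      by (simp add: sum_distrib_right)
    also have "\<dots> = 0" using sum_mu_zero[of "{1..r'}"] r2 by simp
    finally show "(\<lambda>n. real n powr (real (\<Sum>j=1..r'. tlen (\<sigma> (g j))) / 2) *
               kappa (Mrho (\<rho> n) n) r' (\<sigma> \<circ> g)) \<longlonglongrightarrow> 0"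
      using lim tendsto_cong[OF kap[where r'=r' and g=g]] by simp
  qed
  have A1: ALL1 if H2: "(\<forall>r'\<ge>2. \<forall>g. inj_on g {1..r'} \<and> g ` {1..r'} \<subseteq> {1..r} \<longrightarrow>
            (\<lambda>n. real n powr (real (\<Sum>j=1..r'. tlen (\<sigma> (g j))) / 2) *
               kappa (Mrho (\<rho> n) n) r' (\<sigma> \<circ> g)) \<longlonglongrightarrow> 0)"
  proof -
    have "\<forall>xs. length xs = m \<longrightarrow> xs \<noteq> [] \<longrightarrow> distinct xs \<longrightarrow> set xs \<subseteq> {1..r} \<longrightarrow>
       (\<lambda>n. Pm M \<sigma> n xs) \<longlonglongrightarrow> (\<Prod>j\<in>set xs. L j)" for m
    proof (induction m rule: less_induct)
      case (less m)
      show ?case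
      proof (intro allI impI)
        fix xs :: "nat list" assume lx: "length xs = m" and xs: "xs \<noteq> []" "distinct xs" "set xs \<subseteq> {1..r}"
        show "(\<lambda>n. Pm M \<sigma> n xs) \<longlonglongrightarrow> (\<Prod>j\<in>set xs. L j)"
        proof (cases "m = 1")
          case True
          then obtain j where j: "xs = [j]" using lx by (cases xs) auto
          then show ?thesis using single[of j] xs(3) by simp
        next
          case False
          then have m2: "m \<ge> 2" using lx xs(1) by (cases xs) auto
          define g where "g = (\<lambda>k. xs ! (k - 1))"
          note nm = nth_map_list[OF xs(2), folded g_def, unfolded lx]
          have gr: "g ` {1..m} \<subseteq> {1..r}" using nm(2) xs(3) by simp
          define C where "C = (\<Prod>j\<in>{1..m}. L (g j))"
          have C: "C = (\<Prod>j\<in>set xs. L j)"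
            using prod.reindex[OF nm(1), of L] nm(2) unfolding C_def by (simp add: o_def)
          define Ps where "Ps = {P. partition_on {1..m} P}"
          define P0 where "P0 = {{1..m::nat}}"
          define f where "f n P = (-1) ^ (card P - 1) * fact (card P - 1) *
              (\<Prod>B\<in>P. Pm M \<sigma> n (map g (sorted_list_of_set B)))" for n P
          have finPs: "finite Ps" unfolding Ps_def by (rule finitely_many_partition_on) simp
          have P0: "P0 \<in> Ps" unfolding P0_def Ps_def using m2 by (simp add: partition_on_space)
          have kl: "(\<lambda>n. \<Sum>P\<in>Ps. f n P) \<longlonglongrightarrow> 0"
          proof -
            have "(\<lambda>n. real n powr (real (\<Sum>j=1..m. tlen (\<sigma> (g j))) / 2) *
               kappa (Mrho (\<rho> n) n) m (\<sigma> \<circ> g)) \<longlonglongrightarrow> 0" using H2 m2 nm(1) gr by blast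
            then show ?thesis using tendsto_cong[OF kap[where r'=m and g=g]] unfolding Ps_def f_def by simp
          qed
          have s0: "map g (sorted_list_of_set {1..m}) = xs" using nm(3) sorted_1n[of m] by (simp only:)
          have f0: "f n P0 = Pm M \<sigma> n xs" for n
            unfolding f_def P0_def using s0 by simp
          have rest: "(\<lambda>n. \<Sum>P\<in>Ps - {P0}. f n P) \<longlonglongrightarrow>
              (\<Sum>P\<in>Ps - {P0}. (-1) ^ (card P - 1) * fact (card P - 1) * (\<Prod>B\<in>P. \<Prod>j\<in>B. L (g j)))"
            unfolding f_def
          proof (intro tendsto_sum tendsto_mult tendsto_const tendsto_prod)
            fix P B assume P: "P \<in> Ps - {P0}" and B: "B \<in> P"
            have P': "partition_on {1..m} P" using P unfolding Ps_def by simp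
            note bl = block_list[OF nm(1) gr P' B]
            have "B \<noteq> {1..m}" using part_proper[OF P' _ B] P unfolding P0_def by blast
            moreover have "B \<subseteq> {1..m}" using part_blocks[OF P' B] by simp
            ultimately have "card B < m" using psubset_card_mono[of "{1..m}" B] by fastforce
            then have "(\<lambda>n. Pm M \<sigma> n (map g (sorted_list_of_set B))) \<longlonglongrightarrow> (\<Prod>j\<in>set (map g (sorted_list_of_set B)). L j)"
              using less.IH[of "card B"] bl(1,2,3,4) by blast
            then show "(\<lambda>n. Pm M \<sigma> n (map g (sorted_list_of_set B))) \<longlonglongrightarrow> (\<Prod>j\<in>B. L (g j))"
              using bl(5) by simp
          qed
          have "(\<Sum>P\<in>Ps - {P0}. (-1) ^ (card P - 1) * fact (card P - 1) * (\<Prod>B\<in>P. \<Prod>j\<in>B. L (g j)))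
              = (\<Sum>P\<in>Ps - {P0}. (-1::real) ^ (card P - 1) * fact (card P - 1)) * C"
            unfolding sum_distrib_right C_def
            by (rule sum.cong[OF refl]) (simp add: prod_part Ps_def)
          also have "(\<Sum>P\<in>Ps - {P0}. (-1::real) ^ (card P - 1) * fact (card P - 1)) = -1"
          proof -
            have "(\<Sum>P\<in>Ps. (-1::real) ^ (card P - 1) * fact (card P - 1)) = 0"
              unfolding Ps_def using sum_mu_zero[of "{1..m}"] m2 by simp
            moreover have "(\<Sum>P\<in>Ps. (-1::real) ^ (card P - 1) * fact (card P - 1))
               = (-1::real) ^ (card P0 - 1) * fact (card P0 - 1) + (\<Sum>P\<in>Ps - {P0}. (-1::real) ^ (card P - 1) * fact (card P - 1))"
              using sum.remove[OF finPs P0] by blast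
            moreover have "card P0 = 1" unfolding P0_def by simp
            ultimately show ?thesis by simp
          qed
          finally have rest': "(\<lambda>n. \<Sum>P\<in>Ps - {P0}. f n P) \<longlonglongrightarrow> - C" using rest by simp
          have "(\<lambda>n. (\<Sum>P\<in>Ps. f n P) - (\<Sum>P\<in>Ps - {P0}. f n P)) \<longlonglongrightarrow> 0 - (- C)"
            by (rule tendsto_diff[OF kl rest'])
          moreover have "(\<Sum>P\<in>Ps. f n P) - (\<Sum>P\<in>Ps - {P0}. f n P) = Pm M \<sigma> n xs" for n
            using sum.remove[OF finPs P0, of "f n"] f0 by simp
          ultimately show ?thesis using C by simp
        qed
      qed
    qed
    then show ALL1 unfolding ALL1_def by blast
  qed
  show ?thesis using eq1 A1 A2 by blast
qed


end
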